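(* Let $W=\langle w_1,\ldots,w_n\rangle$ be a weave. (a) If $W$ is FF, then $W$ is transitive. (b) If $n$ is even and $W$ is FB, then $\{w_2,\ldots,w_n\}$ is a homogeneous set of $W$. (c) If $n$ is even and $W$ is BF, then $\{w_1,\ldots,w_{n-1}\}$ is a homogeneous set of $W$. (d) If $n$ is even and $W$ is BB, then $\{w_1,w_n\}$ is a homogeneous set of $W$. (e) If $n$ is odd and $W$ is FB, then $\{w_1,\ldots,w_{n-1}\}$ is a homogeneous set of $W$. (f) If $n$ is odd and $W$ is BF, then $W$ is isomorphic to $U_n$. (g) If $n$ is odd and $W$ is BB, then $W$ is isomorphic to $T_n$. Now let $v\notin V(W)$ be a vertex such that $v\to w_i$ for odd $i$ and $w_i\to v$ for even $i$, and let $W+v$ be the resulting tournament on $V(W)\cup\{v\}$. (h) If $n$ is odd and $W$ is FF or FB, then $\{v,w_1,\ldots,w_{n-1}\}$ is a homogeneous set of $W+v$. (i) If $n$ is odd and $W$ is BF or BB, then $\{v,w_n\}$ is a homogeneous set of $W+v$. (j) If $n$ is even and $W$ is FF, then $W+v$ is isomorphic to $W_{n+1}$. (k) If $n$ is even and $W$ is FB or BF, then $W+v$ is isomorphic to $U_{n+1}$. (l) If $n$ is even and $W$ is BB, then $W+v$ is isomorphic to $T_{n+1}$.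
   Context: A tournament is a finite, non-null, loopless directed graph in which for any two distinct vertices $u,v$ there is exactly one edge with both ends in $\{u,v\}$; write $u\to v$ for the edge from $u$ to $v$, and $X\Rightarrow Y$ if $x\to y$ for all $x\in X,y\in Y$. A tournament is transitive if its vertices can be ordered so that all edges go forward. A homogeneous set of $G$ is a set $X\subseteq V(G)$ such that each vertex outside $X$ either has edges to all of $X$ or edges from all of $X$. A weave $\langle w_1,\dots,w_n\rangle$ is a tournament on $w_1,\dots,w_n$ such that: (1) $w_i\to w_j$ whenever $i<j$ and $i,j$ have opposite parity; (2) either (2a) $w_i\to w_j$ for all $i<j$ both odd, or (2b) $w_j\to w_i$ for all $i<j$ both odd; (3) either (3a) $w_i\to w_j$ for all $i<j$ both even, or (3b) $w_j\to w_i$ for all $i<j$ both even. It is FF if (2a),(3a) hold; FB if (2a),(3b); BF if (2b),(3a); BB if (2b),(3b). For $n=2k+1$: $T_n$ is the tournament on $v_1,\dots,v_n$ with $v_i\to v_j$ iff $j\equiv i+1,\dots,i+k\pmod n$; $U_n$ is obtained from $T_n$ by reversing all edges with both ends in $\{v_1,\dots,v_k\}$; $W_n$ is the tournament on $x_1,\dots,x_n$ with $x_i\to x_j$ for $1\le i<j\le n-1$ and $\{x_2,x_4,\dots,x_{n-1}\}\Rightarrow x_n\Rightarrow\{x_1,x_3,\dots,x_{n-2}\}$. *)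

theory Defs
  imports Main
begin

text \<open>A tournament with vertex set V and edge relation E (E u v means u \<rightarrow> v).
  Only the restriction of E to V matters.\<close>
definition tournament :: "'a set \<Rightarrow> ('a \<Rightarrow> 'a \<Rightarrow> bool) \<Rightarrow> bool" where
  "tournament V E \<longleftrightarrow> finite V \<and> V \<noteq> {} \<and> (\<forall>u\<in>V. \<not> E u u) \<and>
     (\<forall>u\<in>V. \<forall>v\<in>V. u \<noteq> v \<longrightarrow> (E u v \<longleftrightarrow> \<not> E v u))"

definition transitive_tournament :: "'a set \<Rightarrow> ('a \<Rightarrow> 'a \<Rightarrow> bool) \<Rightarrow> bool" where
  "transitive_tournament V E \<longleftrightarrow> tournament V E \<and>
     (\<exists>f. bij_betw f {..<card V} V \<and>
          (\<forall>i j. i < j \<and> j < card V \<longrightarrow> E (f i) (f j)))"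

definition homogeneous_set :: "'a set \<Rightarrow> ('a \<Rightarrow> 'a \<Rightarrow> bool) \<Rightarrow> 'a set \<Rightarrow> bool" where
  "homogeneous_set V E X \<longleftrightarrow> X \<subseteq> V \<and>
     (\<forall>y\<in>V - X. (\<forall>x\<in>X. E y x) \<or> (\<forall>x\<in>X. E x y))"

definition tourn_iso :: "'a set \<Rightarrow> ('a \<Rightarrow> 'a \<Rightarrow> bool) \<Rightarrow> 'b set \<Rightarrow> ('b \<Rightarrow> 'b \<Rightarrow> bool) \<Rightarrow> bool" where
  "tourn_iso V E V' E' \<longleftrightarrow>
     (\<exists>f. bij_betw f V V' \<and> (\<forall>u\<in>V. \<forall>v\<in>V. E u v \<longleftrightarrow> E' (f u) (f v)))"

definition weave :: "'a set \<Rightarrow> ('a \<Rightarrow> 'a \<Rightarrow> bool) \<Rightarrow> (nat \<Rightarrow> 'a) \<Rightarrow> nat \<Rightarrow> bool" where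
  "weave V E w n \<longleftrightarrow> tournament V E \<and> inj_on w {1..n} \<and> w ` {1..n} = V \<and>
     (\<forall>i j. 1 \<le> i \<and> i < j \<and> j \<le> n \<and> odd (i + j) \<longrightarrow> E (w i) (w j)) \<and>
     ((\<forall>i j. 1 \<le> i \<and> i < j \<and> j \<le> n \<and> odd i \<and> odd j \<longrightarrow> E (w i) (w j)) \<or>
      (\<forall>i j. 1 \<le> i \<and> i < j \<and> j \<le> n \<and> odd i \<and> odd j \<longrightarrow> E (w j) (w i))) \<and>
     ((\<forall>i j. 1 \<le> i \<and> i < j \<and> j \<le> n \<and> even i \<and> even j \<longrightarrow> E (w i) (w j)) \<or>
      (\<forall>i j. 1 \<le> i \<and> i < j \<and> j \<le> n \<and> even i \<and> even j \<longrightarrow> E (w j) (w i)))"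

definition odd_fwd :: "('a \<Rightarrow> 'a \<Rightarrow> bool) \<Rightarrow> (nat \<Rightarrow> 'a) \<Rightarrow> nat \<Rightarrow> bool" where
  "odd_fwd E w n \<longleftrightarrow> (\<forall>i j. 1 \<le> i \<and> i < j \<and> j \<le> n \<and> odd i \<and> odd j \<longrightarrow> E (w i) (w j))"
definition odd_bwd :: "('a \<Rightarrow> 'a \<Rightarrow> bool) \<Rightarrow> (nat \<Rightarrow> 'a) \<Rightarrow> nat \<Rightarrow> bool" where
  "odd_bwd E w n \<longleftrightarrow> (\<forall>i j. 1 \<le> i \<and> i < j \<and> j \<le> n \<and> odd i \<and> odd j \<longrightarrow> E (w j) (w i))"
definition even_fwd :: "('a \<Rightarrow> 'a \<Rightarrow> bool) \<Rightarrow> (nat \<Rightarrow> 'a) \<Rightarrow> nat \<Rightarrow> bool" where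
  "even_fwd E w n \<longleftrightarrow> (\<forall>i j. 1 \<le> i \<and> i < j \<and> j \<le> n \<and> even i \<and> even j \<longrightarrow> E (w i) (w j))"
definition even_bwd :: "('a \<Rightarrow> 'a \<Rightarrow> bool) \<Rightarrow> (nat \<Rightarrow> 'a) \<Rightarrow> nat \<Rightarrow> bool" where
  "even_bwd E w n \<longleftrightarrow> (\<forall>i j. 1 \<le> i \<and> i < j \<and> j \<le> n \<and> even i \<and> even j \<longrightarrow> E (w j) (w i))"

definition weave_FF where "weave_FF V E w n \<longleftrightarrow> weave V E w n \<and> odd_fwd E w n \<and> even_fwd E w n"
definition weave_FB where "weave_FB V E w n \<longleftrightarrow> weave V E w n \<and> odd_fwd E w n \<and> even_bwd E w n"
definition weave_BF where "weave_BF V E w n \<longleftrightarrow> weave V E w n \<and> odd_bwd E w n \<and> even_fwd E w n"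
definition weave_BB where "weave_BB V E w n \<longleftrightarrow> weave V E w n \<and> odd_bwd E w n \<and> even_bwd E w n"

text \<open>T_n, U_n, W_n on vertex set {1..n} (vertex i stands for v_i resp. x_i), n = 2k+1.\<close>
definition T_edge :: "nat \<Rightarrow> nat \<Rightarrow> nat \<Rightarrow> bool" where
  "T_edge n i j \<longleftrightarrow> (let d = (int j - int i) mod int n in 1 \<le> d \<and> d \<le> int (n div 2))"

definition U_edge :: "nat \<Rightarrow> nat \<Rightarrow> nat \<Rightarrow> bool" where
  "U_edge n i j \<longleftrightarrow> (if 1 \<le> i \<and> i \<le> n div 2 \<and> 1 \<le> j \<and> j \<le> n div 2
                      then T_edge n j i else T_edge n i j)"

definition W_edge :: "nat \<Rightarrow> nat \<Rightarrow> nat \<Rightarrow> bool" where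
  "W_edge n i j \<longleftrightarrow> (1 \<le> i \<and> i < j \<and> j \<le> n - 1) \<or>
                     (j = n \<and> 1 \<le> i \<and> i < n \<and> even i) \<or>
                     (i = n \<and> 1 \<le> j \<and> j < n \<and> odd j)"

definition add_vertex :: "('a \<Rightarrow> 'a \<Rightarrow> bool) \<Rightarrow> (nat \<Rightarrow> 'a) \<Rightarrow> nat \<Rightarrow> 'a \<Rightarrow> 'a \<Rightarrow> 'a \<Rightarrow> bool" where
  "add_vertex E w n v x y \<longleftrightarrow>
     (if x = v \<and> y = v then False
      else if x = v then (\<exists>i\<in>{1..n}. odd i \<and> y = w i)
      else if y = v then (\<exists>i\<in>{1..n}. even i \<and> x = w i)
      else E x y)"

end

theory Submission
  imports Defs
begin

definition wr :: "bool \<Rightarrow> bool \<Rightarrow> nat \<Rightarrow> nat \<Rightarrow> bool" where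
  "wr ob eb i j = (i \<noteq> j \<and> (if odd i = odd j then (if odd i then (if ob then j<i else i<j) else (if eb then j<i else i<j)) else i<j))"

definition sT :: "nat \<Rightarrow> nat \<Rightarrow> nat" where
  "sT n i = (if odd i then n div 2 + 1 - (i-1) div 2 else n + 1 - i div 2)"

definition sU :: "nat \<Rightarrow> nat \<Rightarrow> nat" where
  "sU n i = (if odd i then n - (i-1) div 2 else n div 2 + 1 - i div 2)"

definition wv :: "bool \<Rightarrow> bool \<Rightarrow> nat \<Rightarrow> nat \<Rightarrow> nat \<Rightarrow> bool" where
  "wv ob eb n i j = (if i = n+1 \<and> j = n+1 then False else if i = n+1 then odd j
     else if j = n+1 then even i else wr ob eb i j)"

definition sh :: "nat \<Rightarrow> nat \<Rightarrow> nat" where "sh n i = (if i = n+1 then 1 else i+1)"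

theorem proposition3p2:
  fixes V :: "'a set" and E :: "'a \<Rightarrow> 'a \<Rightarrow> bool" and w :: "nat \<Rightarrow> 'a" and n :: nat
  assumes W: "weave V E w n"
  shows
    "(weave_FF V E w n \<longrightarrow> transitive_tournament V E) \<and>
     (even n \<and> weave_FB V E w n \<longrightarrow> homogeneous_set V E (w ` {2..n})) \<and>
     (even n \<and> weave_BF V E w n \<longrightarrow> homogeneous_set V E (w ` {1..n-1})) \<and>
     (even n \<and> weave_BB V E w n \<longrightarrow> homogeneous_set V E {w 1, w n}) \<and>
     (odd n \<and> weave_FB V E w n \<longrightarrow> homogeneous_set V E (w ` {1..n-1})) \<and>
     (odd n \<and> weave_BF V E w n \<longrightarrow> tourn_iso V E {1..n} (U_edge n)) \<and>
     (odd n \<and> weave_BB V E w n \<longrightarrow> tourn_iso V E {1..n} (T_edge n)) \<and>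
     (\<forall>v. v \<notin> V \<longrightarrow>
        (odd n \<and> (weave_FF V E w n \<or> weave_FB V E w n) \<longrightarrow>
           homogeneous_set (insert v V) (add_vertex E w n v) (insert v (w ` {1..n-1}))) \<and>
        (odd n \<and> (weave_BF V E w n \<or> weave_BB V E w n) \<longrightarrow>
           homogeneous_set (insert v V) (add_vertex E w n v) {v, w n}) \<and>
        (even n \<and> weave_FF V E w n \<longrightarrow>
           tourn_iso (insert v V) (add_vertex E w n v) {1..n+1} (W_edge (n+1))) \<and>
        (even n \<and> (weave_FB V E w n \<or> weave_BF V E w n) \<longrightarrow>
           tourn_iso (insert v V) (add_vertex E w n v) {1..n+1} (U_edge (n+1))) \<and>
        (even n \<and> weave_BB V E w n \<longrightarrow>
           tourn_iso (insert v V) (add_vertex E w n v) {1..n+1} (T_edge (n+1))))"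
proof -
  have T_char: "T_edge n a b \<longleftrightarrow> (a < b \<and> b - a \<le> n div 2) \<or> (b < a \<and> a - b > n div 2)" if assms: "odd n" "1 \<le> a" "a \<le> n" "1 \<le> b" "b \<le> n" for n a b :: nat
  proof (cases "a \<le> b")
    case True
    then have "(int b - int a) mod int n = int b - int a"
      using assms by (intro mod_pos_pos_trivial) auto
    then show ?thesis using True assms unfolding T_edge_def Let_def by auto
  next
    case False
    then have "(int b - int a) mod int n = int b - int a + int n"
      using assms by (subst mod_pos_pos_trivial[symmetric, of "int b - int a + int n" "int n"]) auto
    moreover obtain k where "n = 2*k+1" using assms(1) by (auto elim: oddE)
    ultimately show ?thesis using False assms unfolding T_edge_def Let_def by auto
  qed

  have sT_range: "odd n \<Longrightarrow> i \<in> {1..n} \<Longrightarrow> sT n i \<in> {1..n}" for n i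
    unfolding sT_def by (auto elim!: oddE evenE)

  have pcases: "1 \<le> (i::nat) \<Longrightarrow> (\<And>a. i = 2*a+1 \<Longrightarrow> P) \<Longrightarrow> (\<And>a. 1 \<le> a \<Longrightarrow> i = 2*a \<Longrightarrow> P) \<Longrightarrow> P" for i P
    by (cases "odd i") (auto elim!: oddE evenE)

  have sT_arith: "wr True True i j \<longleftrightarrow> T_edge n (sT n i) (sT n j)" if assms: "odd n" "i \<in> {1..n}" "j \<in> {1..n}" for n i j
  proof -
    obtain k where n: "n = 2*k+1" using assms(1) by (auto elim: oddE)
    have i: "1 \<le> i" "i \<le> n" and j: "1 \<le> j" "j \<le> n" using assms by auto
    have T: "T_edge n (sT n i) (sT n j) \<longleftrightarrow> (sT n i < sT n j \<and> sT n j - sT n i \<le> k) \<or> (sT n j < sT n i \<and> sT n i - sT n j > k)"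
      using T_char[OF assms(1) _ _ _ _, of "sT n i" "sT n j"] sT_range[OF assms(1)] assms n by auto
    show ?thesis unfolding T 
      by (rule pcases[OF i(1)]; rule pcases[OF j(1)]; insert i j; simp add: wr_def sT_def n; linarith)
  qed

  have sU_range: "odd n \<Longrightarrow> i \<in> {1..n} \<Longrightarrow> sU n i \<in> {1..n}" for n i
    unfolding sU_def by (auto elim!: oddE evenE)

  have sU_arith: "wr True False i j \<longleftrightarrow> U_edge n (sU n i) (sU n j)" if assms: "odd n" "i \<in> {1..n}" "j \<in> {1..n}" for n i j
  proof -
    obtain k where n: "n = 2*k+1" using assms(1) by (auto elim: oddE)
    have i: "1 \<le> i" "i \<le> n" and j: "1 \<le> j" "j \<le> n" using assms by auto
    have T: "T_edge n (sU n i) (sU n j) \<longleftrightarrow> (sU n i < sU n j \<and> sU n j - sU n i \<le> k) \<or> (sU n j < sU n i \<and> sU n i - sU n j > k)"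
      using T_char[OF assms(1) _ _ _ _, of "sU n i" "sU n j"] sU_range[OF assms(1)] assms n by auto
    have T': "T_edge n (sU n j) (sU n i) \<longleftrightarrow> (sU n j < sU n i \<and> sU n i - sU n j \<le> k) \<or> (sU n i < sU n j \<and> sU n j - sU n i > k)"
      using T_char[OF assms(1) _ _ _ _, of "sU n j" "sU n i"] sU_range[OF assms(1)] assms n by auto
    show ?thesis unfolding U_edge_def T T' 
      by (rule pcases[OF i(1)]; rule pcases[OF j(1)]; insert i j; simp add: wr_def sU_def n; linarith)
  qed

  have sT_inj: "odd n \<Longrightarrow> inj_on (sT n) {1..n}" for n
    unfolding inj_on_def sT_def apply (elim oddE) apply (intro ballI impI)
    subgoal for k i j by (cases "odd i"; cases "odd j"; auto elim!: oddE evenE)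
    done

  have sU_inj: "odd n \<Longrightarrow> inj_on (sU n) {1..n}" for n
    unfolding inj_on_def sU_def apply (elim oddE) apply (intro ballI impI)
    subgoal for k i j by (cases "odd i"; cases "odd j"; auto elim!: oddE evenE)
    done

  have bij_endo: "finite A \<Longrightarrow> (\<And>i. i \<in> A \<Longrightarrow> f i \<in> A) \<Longrightarrow> inj_on f A \<Longrightarrow> bij_betw f A A" for A f
    by (simp add: bij_betw_def endo_inj_surj image_subsetI)

  have wv_true: "even n \<Longrightarrow> i \<in> {1..n+1} \<Longrightarrow> j \<in> {1..n+1} \<Longrightarrow> wv True eb n i j = wr True eb i j" for n i j eb
    unfolding wv_def wr_def by auto

  have wv_FB: "even n \<Longrightarrow> i \<in> {1..n+1} \<Longrightarrow> j \<in> {1..n+1} \<Longrightarrow>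
     wv False True n i j = wr True False (sh n i) (sh n j)" for n i j
    unfolding wv_def wr_def sh_def by auto

  have wv_FF: "even n \<Longrightarrow> i \<in> {1..n+1} \<Longrightarrow> j \<in> {1..n+1} \<Longrightarrow>
     wv False False n i j = W_edge (n+1) i j" for n i j
    unfolding wv_def wr_def W_edge_def by auto

  have sh_bij: "bij_betw (sh n) {1..n+1} {1..n+1}" for n
    by (rule bij_endo) (auto simp: sh_def inj_on_def split: if_splits)

  have wr_swap: "i \<noteq> j \<Longrightarrow> wr ob eb j i \<longleftrightarrow> \<not> wr ob eb i j" for i j ob eb
    unfolding wr_def by (cases ob; cases eb; cases "odd i"; cases "odd j") auto

  have tourn_sw: "tournament V E \<Longrightarrow> u \<in> V \<Longrightarrow> v \<in> V \<Longrightarrow> u \<noteq> v \<Longrightarrow> E u v \<longleftrightarrow> \<not> E v u" for V E u v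
    unfolding tournament_def by blast

  have tourn_irr: "tournament V E \<Longrightarrow> u \<in> V \<Longrightarrow> \<not> E u u" for V E u
    unfolding tournament_def by blast

  have weave_wr: "E (w i) (w j) \<longleftrightarrow> wr ob eb i j" if W: "weave V E w n"
      and ob: "if ob then odd_bwd E w n else odd_fwd E w n"
      and eb: "if eb then even_bwd E w n else even_fwd E w n"
      and i: "i \<in> {1..n}" and j: "j \<in> {1..n}" for V E w n ob eb i j
  proof -
    have T: "tournament V E" and inj: "inj_on w {1..n}" and img: "w ` {1..n} = V"
     and opp: "\<And>i j. 1 \<le> i \<Longrightarrow> i < j \<Longrightarrow> j \<le> n \<Longrightarrow> odd (i + j) \<Longrightarrow> E (w i) (w j)"
      using W unfolding weave_def by blast+
    have lt: "E (w a) (w b) \<longleftrightarrow> wr ob eb a b" if ab: "1 \<le> a" "a < b" "b \<le> n" for a b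
    proof -
      have wa: "w a \<in> V" "w b \<in> V" using img ab by auto
      have ne: "w a \<noteq> w b" using inj ab by (auto dest: inj_onD)
      have sw: "E (w b) (w a) \<longleftrightarrow> \<not> E (w a) (w b)" using tourn_sw[OF T wa(2) wa(1)] ne[symmetric] by blast
      have wr1: "wr ob eb a b \<longleftrightarrow> (if odd a = odd b then (if odd a then (if ob then b<a else a<b) else (if eb then b<a else a<b)) else True)"
        using ab unfolding wr_def by simp
      show ?thesis
      proof (cases "odd a = odd b")
        case False
        then have "odd (a+b)" by auto
        then show ?thesis using opp[OF ab(1,2,3)] False wr1 by simp
      next
        case True
        show ?thesis
        proof (cases "odd a")
          case oa: True
          with True have ob2: "odd b" by simp
          show ?thesis
          proof (cases ob)
            case True
            then have "E (w b) (w a)" using ob ab oa ob2 unfolding odd_bwd_def by simp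
            then show ?thesis using sw wr1 True oa ob2 ab by simp
          next
            case False
            then have "E (w a) (w b)" using ob ab oa ob2 unfolding odd_fwd_def by simp
            then show ?thesis using wr1 False oa ob2 ab by simp
          qed
        next
          case ea: False
          with True have eb2: "even b" by simp
          show ?thesis
          proof (cases eb)
            case True
            then have "E (w b) (w a)" using eb ab ea eb2 unfolding even_bwd_def by simp
            then show ?thesis using sw wr1 True ea eb2 ab by simp
          next
            case False
            then have "E (w a) (w b)" using eb ab ea eb2 unfolding even_fwd_def by simp
            then show ?thesis using wr1 False ea eb2 ab by simp
          qed
        qed
      qed
    qed
    consider "i < j" | "i = j" | "j < i" by arith
    then show ?thesis
    proof cases
      case 1 then show ?thesis using lt i j by auto
    next
      case 2
      have "w i \<in> V" using i img by auto
      then show ?thesis using tourn_irr[OF T] 2 unfolding wr_def by simp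
    next
      case 3
      have wa: "w i \<in> V" "w j \<in> V" using img i j by auto
      have ne: "w i \<noteq> w j" using inj i j 3 by (auto dest: inj_onD)
      have sw: "E (w i) (w j) \<longleftrightarrow> \<not> E (w j) (w i)" using tourn_sw[OF T wa] ne by blast
      have "E (w j) (w i) \<longleftrightarrow> wr ob eb j i" using lt[of j i] 3 i j by auto
      then show ?thesis using sw wr_swap[of i j ob eb] 3 by auto
    qed
  qed

  have iso_from_index: "tourn_iso V E B R" if inj: "inj_on w A" and img: "w ` A = V" and bij: "bij_betw s A B"
      and e: "\<And>i j. i \<in> A \<Longrightarrow> j \<in> A \<Longrightarrow> E (w i) (w j) \<longleftrightarrow> R (s i) (s j)" for w A V s B E R
  proof -
    have bw: "bij_betw w A V" using inj img by (simp add: bij_betw_def)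
    define g where "g = the_inv_into A w"
    have bg: "bij_betw g V A" unfolding g_def using bw by (rule bij_betw_the_inv_into)
    have gw: "\<And>x. x \<in> V \<Longrightarrow> w (g x) = x" unfolding g_def using inj img
      by (auto intro: f_the_inv_into_f)
    have gA: "\<And>x. x \<in> V \<Longrightarrow> g x \<in> A" using bg by (auto simp: bij_betw_def)
    show ?thesis unfolding tourn_iso_def
    proof (intro exI[of _ "s \<circ> g"] conjI ballI)
      show "bij_betw (s \<circ> g) V B" using bg bij by (rule bij_betw_trans)
    next
      fix u v assume "u \<in> V" "v \<in> V"
      then show "E u v \<longleftrightarrow> R ((s \<circ> g) u) ((s \<circ> g) v)"
        using e[of "g u" "g v"] gw gA by auto
    qed
  qed

  have hom_index: "homogeneous_set V E (w ` S)" if inj: "inj_on w A" and img: "w ` A = V" and S: "S \<subseteq> A"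
      and e: "\<And>i j. i \<in> A \<Longrightarrow> j \<in> A \<Longrightarrow> E (w i) (w j) \<longleftrightarrow> R i j"
      and h: "\<And>k. k \<in> A \<Longrightarrow> k \<notin> S \<Longrightarrow> (\<forall>j\<in>S. R k j) \<or> (\<forall>j\<in>S. R j k)" for w A V S E R
  unfolding homogeneous_set_def
  proof (intro conjI ballI)
    show "w ` S \<subseteq> V" using S img by auto
  next
    fix y assume "y \<in> V - w ` S"
    then obtain k where k: "k \<in> A" "y = w k" "k \<notin> S" using img by auto
    show "(\<forall>x\<in>w ` S. E y x) \<or> (\<forall>x\<in>w ` S. E x y)"
      using h[OF k(1,3)] e k S by auto
  qed

  have addv: "add_vertex E w n v ((w(n+1:=v)) i) ((w(n+1:=v)) j) \<longleftrightarrow> wv ob eb n i j" if W: "weave V E w n" and v: "v \<notin> V"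
      and ob: "if ob then odd_bwd E w n else odd_fwd E w n"
      and eb: "if eb then even_bwd E w n else even_fwd E w n"
      and i: "i \<in> {1..n+1}" and j: "j \<in> {1..n+1}" for V E w n v ob eb i j
  proof -
    have inj: "inj_on w {1..n}" and img: "w ` {1..n} = V"
      using W unfolding weave_def by blast+
    have nv: "\<And>k. k \<in> {1..n} \<Longrightarrow> w k \<noteq> v" using img v by auto
    have ex: "\<And>k P. k \<in> {1..n} \<Longrightarrow> (\<exists>i'\<in>{1..n}. P i' \<and> w k = w i') \<longleftrightarrow> P k"
      using inj by (auto dest: inj_onD)
    consider "i = n+1" "j = n+1" | "i = n+1" "j \<le> n" | "i \<le> n" "j = n+1" | "i \<le> n" "j \<le> n"
      using i j by fastforce
    then show ?thesis
    proof cases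
      case 1 then show ?thesis unfolding add_vertex_def wv_def by simp
    next
      case 2
      then have jj: "j \<in> {1..n}" using j by auto
      have a: "(w(n+1:=v)) i = v" "(w(n+1:=v)) j = w j" using 2 by auto
      show ?thesis unfolding a using 2 nv[OF jj] ex[OF jj, of odd] unfolding add_vertex_def wv_def by simp
    next
      case 3
      then have ii: "i \<in> {1..n}" using i by auto
      have a: "(w(n+1:=v)) j = v" "(w(n+1:=v)) i = w i" using 3 by auto
      show ?thesis unfolding a using 3 nv[OF ii] ex[OF ii, of even] unfolding add_vertex_def wv_def by simp
    next
      case 4
      then have ii: "i \<in> {1..n}" and jj: "j \<in> {1..n}" using i j by auto
      have a: "(w(n+1:=v)) i = w i" "(w(n+1:=v)) j = w j" using 4 by auto
      have "wv ob eb n i j = wr ob eb i j" using 4 unfolding wv_def by auto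
      then show ?thesis unfolding a using nv[OF ii] nv[OF jj] weave_wr[OF W ob eb ii jj]
        unfolding add_vertex_def by simp
    qed
  qed

  have addv_inj: "inj_on (w(n+1:=v)) {1..n+1}" "(w(n+1:=v)) ` {1..n+1} = insert v V" if W: "weave V E w n" and v: "v \<notin> V" for V E w n v
  proof -
    have inj: "inj_on w {1..n}" and img: "w ` {1..n} = V"
      using W unfolding weave_def by blast+
    have e: "{1..n+1} = insert (n+1) {1..n}" by auto
    have eq: "\<And>k. k \<in> {1..n} \<Longrightarrow> (w(n+1:=v)) k = w k" by simp
    have "(w(n+1:=v)) ` {1..n} = w ` {1..n}" by (rule image_cong) auto
    then have im: "(w(n+1:=v)) ` {1..n} = V" using img by simp
    have inj': "inj_on (w(n+1:=v)) {1..n}" using inj inj_on_cong[of "{1..n}" "w(n+1:=v)" w] eq by blast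
    show "inj_on (w(n+1:=v)) {1..n+1}" unfolding e inj_on_insert
      using inj' im v by simp
    show "(w(n+1:=v)) ` {1..n+1} = insert v V" unfolding e image_insert im by simp
  qed

  have sU_bij: "bij_betw (sU n) {1..n} {1..n}" if assms: "odd n" for n
  proof (rule bij_endo[of "{1..n}" "sU n"])
    show "finite {1..n}" by simp
    show "inj_on (sU n) {1..n}" by (rule sU_inj[OF assms])
    fix i assume "i \<in> {1..n}"
    then show "sU n i \<in> {1..n}" by (rule sU_range[OF assms])
  qed

  have sT_bij: "bij_betw (sT n) {1..n} {1..n}" if assms: "odd n" for n
  proof (rule bij_endo[of "{1..n}" "sT n"])
    show "finite {1..n}" by simp
    show "inj_on (sT n) {1..n}" by (rule sT_inj[OF assms])
    fix i assume "i \<in> {1..n}"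
    then show "sT n i \<in> {1..n}" by (rule sT_range[OF assms])
  qed
  have T: "tournament V E" and inj: "inj_on w {1..n}" and img: "w ` {1..n} = V"
    using W unfolding weave_def by blast+
  have n1: "1 \<le> n" using T img unfolding tournament_def by (cases n) auto
  have e: "\<And>i j. i \<in> {1..n} \<Longrightarrow> j \<in> {1..n} \<Longrightarrow> E (w i) (w j) \<longleftrightarrow> wr ob eb i j"
    if "if ob then odd_bwd E w n else odd_fwd E w n" "if eb then even_bwd E w n else even_fwd E w n" for ob eb
    using weave_wr[OF W that] by blast
  have FF: "weave_FF V E w n \<longleftrightarrow> (if False then odd_bwd E w n else odd_fwd E w n) \<and> (if False then even_bwd E w n else even_fwd E w n)"
    using W unfolding weave_FF_def by simp
  have FB: "weave_FB V E w n \<longleftrightarrow> (if False then odd_bwd E w n else odd_fwd E w n) \<and> (if True then even_bwd E w n else even_fwd E w n)"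
    using W unfolding weave_FB_def by simp
  have BF: "weave_BF V E w n \<longleftrightarrow> (if True then odd_bwd E w n else odd_fwd E w n) \<and> (if False then even_bwd E w n else even_fwd E w n)"
    using W unfolding weave_BF_def by simp
  have BB: "weave_BB V E w n \<longleftrightarrow> (if True then odd_bwd E w n else odd_fwd E w n) \<and> (if True then even_bwd E w n else even_fwd E w n)"
    using W unfolding weave_BB_def by simp

  have a: "transitive_tournament V E" if "weave_FF V E w n"
  proof -
    have ee: "\<And>i j. i \<in> {1..n} \<Longrightarrow> j \<in> {1..n} \<Longrightarrow> E (w i) (w j) \<longleftrightarrow> wr False False i j"
      using e that FF by blast
    have c: "card V = n" using card_image[OF inj] img by simp
    have b1: "bij_betw (\<lambda>i. i+1) {..<n} {1..n}"
      by (rule bij_betw_byWitness[where f'="\<lambda>i. i - 1"]) auto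
    have b2: "bij_betw w {1..n} V" using inj img by (simp add: bij_betw_def)
    have "bij_betw (w \<circ> (\<lambda>i. i+1)) {..<n} V" using b1 b2 by (rule bij_betw_trans)
    then have b: "bij_betw (\<lambda>i. w (i+1)) {..<n} V" by (simp add: comp_def)
    show ?thesis unfolding transitive_tournament_def c
    proof (intro conjI exI[of _ "\<lambda>i. w (i+1)"] allI impI)
      show "tournament V E" by (fact T)
      show "bij_betw (\<lambda>i. w (i+1)) {..<n} V" by (fact b)
      fix i j assume "i < j \<and> j < n"
      then show "E (w (i+1)) (w (j+1))" using ee[of "i+1" "j+1"] unfolding wr_def by auto
    qed
  qed

  have b: "homogeneous_set V E (w ` {2..n})" if "even n" "weave_FB V E w n"
  proof (rule hom_index[OF inj img, of _ _ "wr False True"])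
    show "{2..n} \<subseteq> {1..n}" by auto
    show "\<And>i j. i \<in> {1..n} \<Longrightarrow> j \<in> {1..n} \<Longrightarrow> E (w i) (w j) \<longleftrightarrow> wr False True i j"
      using e that FB by blast
    fix k assume "k \<in> {1..n}" "k \<notin> {2..n}"
    then have "k = 1" by auto
    then show "(\<forall>j\<in>{2..n}. wr False True k j) \<or> (\<forall>j\<in>{2..n}. wr False True j k)"
      unfolding wr_def by auto
  qed

  have c: "homogeneous_set V E (w ` {1..n-1})" if "even n" "weave_BF V E w n"
  proof (rule hom_index[OF inj img, of _ _ "wr True False"])
    show "{1..n-1} \<subseteq> {1..n}" by auto
    show "\<And>i j. i \<in> {1..n} \<Longrightarrow> j \<in> {1..n} \<Longrightarrow> E (w i) (w j) \<longleftrightarrow> wr True False i j"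
      using e that BF by blast
    fix k assume "k \<in> {1..n}" "k \<notin> {1..n-1}"
    then have "k = n" by auto
    then show "(\<forall>j\<in>{1..n-1}. wr True False k j) \<or> (\<forall>j\<in>{1..n-1}. wr True False j k)"
      using that(1) unfolding wr_def by auto
  qed

  have d: "homogeneous_set V E {w 1, w n}" if "even n" "weave_BB V E w n"
  proof -
    have "homogeneous_set V E (w ` {1, n})"
    proof (rule hom_index[OF inj img, of _ _ "wr True True"])
      show "{1, n} \<subseteq> {1..n}" using n1 by auto
      show "\<And>i j. i \<in> {1..n} \<Longrightarrow> j \<in> {1..n} \<Longrightarrow> E (w i) (w j) \<longleftrightarrow> wr True True i j"
        using e that BB by blast
      fix k assume k: "k \<in> {1..n}" "k \<notin> {1, n}"
      show "(\<forall>j\<in>{1, n}. wr True True k j) \<or> (\<forall>j\<in>{1, n}. wr True True j k)"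
      proof (cases "odd k")
        case True then show ?thesis using k that(1) unfolding wr_def by auto
      next
        case False then show ?thesis using k that(1) unfolding wr_def by auto
      qed
    qed
    then show ?thesis by simp
  qed

  have e5: "homogeneous_set V E (w ` {1..n-1})" if "odd n" "weave_FB V E w n"
  proof (rule hom_index[OF inj img, of _ _ "wr False True"])
    show "{1..n-1} \<subseteq> {1..n}" by auto
    show "\<And>i j. i \<in> {1..n} \<Longrightarrow> j \<in> {1..n} \<Longrightarrow> E (w i) (w j) \<longleftrightarrow> wr False True i j"
      using e that FB by blast
    fix k assume "k \<in> {1..n}" "k \<notin> {1..n-1}"
    then have "k = n" by auto
    then show "(\<forall>j\<in>{1..n-1}. wr False True k j) \<or> (\<forall>j\<in>{1..n-1}. wr False True j k)"
      using that(1) unfolding wr_def by auto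
  qed

  have f: "tourn_iso V E {1..n} (U_edge n)" if "odd n" "weave_BF V E w n"
    proof -
    have ee: "\<And>i j. i \<in> {1..n} \<Longrightarrow> j \<in> {1..n} \<Longrightarrow> E (w i) (w j) \<longleftrightarrow> U_edge n (sU n i) (sU n j)"
      subgoal for i j using e[of True False] that BF sU_arith[OF that(1), of i j] by simp
      done
    show ?thesis by (rule iso_from_index[OF inj img sU_bij[OF that(1)]]) (rule ee)
    qed

  have g: "tourn_iso V E {1..n} (T_edge n)" if "odd n" "weave_BB V E w n"
    proof -
    have ee: "\<And>i j. i \<in> {1..n} \<Longrightarrow> j \<in> {1..n} \<Longrightarrow> E (w i) (w j) \<longleftrightarrow> T_edge n (sT n i) (sT n j)"
      subgoal for i j using e[of True True] that BB sT_arith[OF that(1), of i j] by simp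
      done
    show ?thesis by (rule iso_from_index[OF inj img sT_bij[OF that(1)]]) (rule ee)
    qed

  have vpart: "(odd n \<and> (weave_FF V E w n \<or> weave_FB V E w n) \<longrightarrow>
           homogeneous_set (insert v V) (add_vertex E w n v) (insert v (w ` {1..n-1}))) \<and>
        (odd n \<and> (weave_BF V E w n \<or> weave_BB V E w n) \<longrightarrow>
           homogeneous_set (insert v V) (add_vertex E w n v) {v, w n}) \<and>
        (even n \<and> weave_FF V E w n \<longrightarrow>
           tourn_iso (insert v V) (add_vertex E w n v) {1..n+1} (W_edge (n+1))) \<and>
        (even n \<and> (weave_FB V E w n \<or> weave_BF V E w n) \<longrightarrow>
           tourn_iso (insert v V) (add_vertex E w n v) {1..n+1} (U_edge (n+1))) \<and>
        (even n \<and> weave_BB V E w n \<longrightarrow>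
           tourn_iso (insert v V) (add_vertex E w n v) {1..n+1} (T_edge (n+1)))"
    if v: "v \<notin> V" for v
  proof -
    define w' where "w' = w(n+1:=v)"
    have inj': "inj_on w' {1..n+1}" and img': "w' ` {1..n+1} = insert v V"
      using addv_inj[OF W v] unfolding w'_def by auto
    have e': "\<And>i j. i \<in> {1..n+1} \<Longrightarrow> j \<in> {1..n+1} \<Longrightarrow> add_vertex E w n v (w' i) (w' j) \<longleftrightarrow> wv ob eb n i j"
      if "if ob then odd_bwd E w n else odd_fwd E w n" "if eb then even_bwd E w n else even_fwd E w n" for ob eb
      using addv[OF W v that] unfolding w'_def by blast
    have h: "homogeneous_set (insert v V) (add_vertex E w n v) (insert v (w ` {1..n-1}))"
      if "odd n" "if False then odd_bwd E w n else odd_fwd E w n" "if eb then even_bwd E w n else even_fwd E w n" for eb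
    proof -
      have s: "insert v (w ` {1..n-1}) = w' ` (insert (n+1) {1..n-1})"
        unfolding w'_def image_insert by (auto intro!: image_cong)
      show ?thesis unfolding s
      proof (rule hom_index[OF inj' img', of _ _ "wv False eb n"])
        show "insert (n+1) {1..n-1} \<subseteq> {1..n+1}" by auto
        show "\<And>i j. i \<in> {1..n+1} \<Longrightarrow> j \<in> {1..n+1} \<Longrightarrow> add_vertex E w n v (w' i) (w' j) \<longleftrightarrow> wv False eb n i j"
          using e' that(2,3) by blast
        fix k assume "k \<in> {1..n+1}" "k \<notin> insert (n+1) {1..n-1}"
        then have "k = n" by auto
        then show "(\<forall>j\<in>insert (n+1) {1..n-1}. wv False eb n k j) \<or> (\<forall>j\<in>insert (n+1) {1..n-1}. wv False eb n j k)"
          using that(1) unfolding wv_def wr_def by auto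
      qed
    qed
    have i: "homogeneous_set (insert v V) (add_vertex E w n v) {v, w n}"
      if "odd n" "if True then odd_bwd E w n else odd_fwd E w n" "if eb then even_bwd E w n else even_fwd E w n" for eb
    proof -
      have s: "{v, w n} = w' ` {n+1, n}" unfolding w'_def by (simp add: insert_commute)
      show ?thesis unfolding s
      proof (rule hom_index[OF inj' img', of _ _ "wv True eb n"])
        show "{n+1, n} \<subseteq> {1..n+1}" using n1 by auto
        show "\<And>i j. i \<in> {1..n+1} \<Longrightarrow> j \<in> {1..n+1} \<Longrightarrow> add_vertex E w n v (w' i) (w' j) \<longleftrightarrow> wv True eb n i j"
          using e' that(2,3) by blast
        fix k assume k: "k \<in> {1..n+1}" "k \<notin> {n+1, n}"
        show "(\<forall>j\<in>{n+1, n}. wv True eb n k j) \<or> (\<forall>j\<in>{n+1, n}. wv True eb n j k)"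
        proof (cases "odd k")
          case True then show ?thesis using k that(1) unfolding wv_def wr_def by auto
        next
          case False then show ?thesis using k that(1) unfolding wv_def wr_def by auto
        qed
      qed
    qed
    have j: "tourn_iso (insert v V) (add_vertex E w n v) {1..n+1} (W_edge (n+1))"
      if "even n" "weave_FF V E w n"
      proof -
      have ee: "\<And>i j. i \<in> {1..n+1} \<Longrightarrow> j \<in> {1..n+1} \<Longrightarrow> add_vertex E w n v (w' i) (w' j) \<longleftrightarrow> W_edge (n+1) (id i) (id j)"
        subgoal for i j using e'[of False False] that FF wv_FF[OF that(1), of i j] by simp
        done
      show ?thesis by (rule iso_from_index[OF inj' img' bij_betw_id]) (rule ee)
      qed
    have kBF: "tourn_iso (insert v V) (add_vertex E w n v) {1..n+1} (U_edge (n+1))"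
      if "even n" "weave_BF V E w n"
    proof -
      have o: "odd (n+1)" using that(1) by simp
      show ?thesis
        proof -
        have ee: "\<And>i j. i \<in> {1..n+1} \<Longrightarrow> j \<in> {1..n+1} \<Longrightarrow> add_vertex E w n v (w' i) (w' j) \<longleftrightarrow> U_edge (n+1) (sU (n+1) i) (sU (n+1) j)"
          subgoal for i j using e'[of True False] that BF wv_true[OF that(1), of i j] sU_arith[OF o, of i j] by simp
          done
        show ?thesis by (rule iso_from_index[OF inj' img' sU_bij[OF o]]) (rule ee)
        qed
    qed
    have l: "tourn_iso (insert v V) (add_vertex E w n v) {1..n+1} (T_edge (n+1))"
      if "even n" "weave_BB V E w n"
    proof -
      have o: "odd (n+1)" using that(1) by simp
      show ?thesis
        proof -
        have ee: "\<And>i j. i \<in> {1..n+1} \<Longrightarrow> j \<in> {1..n+1} \<Longrightarrow> add_vertex E w n v (w' i) (w' j) \<longleftrightarrow> T_edge (n+1) (sT (n+1) i) (sT (n+1) j)"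
          subgoal for i j using e'[of True True] that BB wv_true[OF that(1), of i j] sT_arith[OF o, of i j] by simp
          done
        show ?thesis by (rule iso_from_index[OF inj' img' sT_bij[OF o]]) (rule ee)
        qed
    qed
    have kFB: "tourn_iso (insert v V) (add_vertex E w n v) {1..n+1} (U_edge (n+1))"
      if "even n" "weave_FB V E w n"
    proof -
      have o: "odd (n+1)" using that(1) by simp
      have bs: "bij_betw (sU (n+1) \<circ> sh n) {1..n+1} {1..n+1}"
        using sh_bij sU_bij[OF o] by (blast intro: bij_betw_trans)
      have shr: "\<And>i. i \<in> {1..n+1} \<Longrightarrow> sh n i \<in> {1..n+1}" unfolding sh_def by auto
      show ?thesis
        proof -
        have ee: "\<And>i j. i \<in> {1..n+1} \<Longrightarrow> j \<in> {1..n+1} \<Longrightarrow> add_vertex E w n v (w' i) (w' j) \<longleftrightarrow> U_edge (n+1) ((sU (n+1) \<circ> sh n) i) ((sU (n+1) \<circ> sh n) j)"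
          subgoal for i j using e'[of False True] that FB wv_FB[OF that(1), of i j] sU_arith[OF o, of "sh n i" "sh n j"] shr[of i] shr[of j] by simp
          done
        show ?thesis by (rule iso_from_index[OF inj' img' bs]) (rule ee)
        qed
    qed
    show ?thesis
    proof (intro conjI impI)
      assume a: "odd n \<and> (weave_FF V E w n \<or> weave_FB V E w n)"
      then have o: "odd n" by simp
      from a show "homogeneous_set (insert v V) (add_vertex E w n v) (insert v (w ` {1..n-1}))"
      proof (elim conjE disjE)
        assume "weave_FF V E w n"
        then have p: "(if False then odd_bwd E w n else odd_fwd E w n) \<and> (if False then even_bwd E w n else even_fwd E w n)"
          using FF by blast
        show ?thesis by (rule h[OF o conjunct1[OF p] conjunct2[OF p]])
      next
        assume "weave_FB V E w n"
        then have p: "(if False then odd_bwd E w n else odd_fwd E w n) \<and> (if True then even_bwd E w n else even_fwd E w n)"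
          using FB by blast
        show ?thesis by (rule h[OF o conjunct1[OF p] conjunct2[OF p]])
      qed
    next
      assume a: "odd n \<and> (weave_BF V E w n \<or> weave_BB V E w n)"
      then have o: "odd n" by simp
      from a show "homogeneous_set (insert v V) (add_vertex E w n v) {v, w n}"
      proof (elim conjE disjE)
        assume "weave_BF V E w n"
        then have p: "(if True then odd_bwd E w n else odd_fwd E w n) \<and> (if False then even_bwd E w n else even_fwd E w n)"
          using BF by blast
        show ?thesis by (rule i[OF o conjunct1[OF p] conjunct2[OF p]])
      next
        assume "weave_BB V E w n"
        then have p: "(if True then odd_bwd E w n else odd_fwd E w n) \<and> (if True then even_bwd E w n else even_fwd E w n)"
          using BB by blast
        show ?thesis by (rule i[OF o conjunct1[OF p] conjunct2[OF p]])
      qed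
    next
      assume "even n \<and> weave_FF V E w n"
      then show "tourn_iso (insert v V) (add_vertex E w n v) {1..n+1} (W_edge (n+1))"
        using j by blast
    next
      assume "even n \<and> (weave_FB V E w n \<or> weave_BF V E w n)"
      then show "tourn_iso (insert v V) (add_vertex E w n v) {1..n+1} (U_edge (n+1))"
        using kFB kBF by blast
    next
      assume "even n \<and> weave_BB V E w n"
      then show "tourn_iso (insert v V) (add_vertex E w n v) {1..n+1} (T_edge (n+1))"
        using l by blast
    qed
  qed
  show ?thesis
    apply (intro conjI)
    subgoal using a by blast
    subgoal using b by blast
    subgoal using c by blast
    subgoal using d by blast
    subgoal using e5 by blast
    subgoal using f by blast
    subgoal using g by blast
    subgoal using vpart by blast
    done
qed

end
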